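(* Consider $n$ agents in the plane evolving according to the piecewise continuous-time dynamics described in the context, with blind-zone radius $\delta>0$. Suppose that at the beginning $t=k$ (an integer) of a time-interval $[k,k+1)$, the agents are not all confined in a disc of radius $\delta$. Then there is an agent which, with a strictly positive probability bounded below by a constant depending only on $n$ (conditionally on the configuration at time $k$), moves during $[k,k+1)$ a distance bounded away from zero by a constant depending only on $n$ and $\delta$ (not on the configuration).
   Context: Agents $1,\dots,n$ have positions $p_i(t)\in\mathbb{R}^2$. Fix $\delta>0$. For each integer $k\ge 0$ and each agent $i$, let $\chi^{(i)}_k$ be independent random variables, uniformly distributed on $[0,2\pi)$, and set the heading $\theta_i(t)=\chi^{(i)}_k$ for $t\in[k,k+1)$, with unit heading vector $\hat\theta_i(t)=(\cos\theta_i(t),\sin\theta_i(t))^\top$. The motion law is $\dot p_i(t)=\hat\theta_i(t)\,s_i(t)$, where $s_i(t)=0$ if there exists an agent $j$ with $d_{ij}(t)>\delta$ and $\hat\theta_i(t)^\top\big(p_j(t)-p_i(t)\big)\le 0$, and $s_i(t)=1$ otherwise. Here $d_{ij}(t)=\|p_i(t)-p_j(t)\|$. Each time-interval $[k,k+1)$ has length $\Delta t=1$. *)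

theory Defs
  imports "HOL-Probability.Probability"
begin

definition heading :: "real \<Rightarrow> real^2" where
  "heading a = vector [cos a, sin a]"

definition agent_speed :: "nat \<Rightarrow> real \<Rightarrow> real \<Rightarrow> (nat \<Rightarrow> real^2) \<Rightarrow> nat \<Rightarrow> real" where
  "agent_speed n \<delta> a p i =
     (if \<exists>j<n. dist (p i) (p j) > \<delta> \<and> heading a \<bullet> (p j - p i) \<le> 0 then 0 else 1)"

text \<open>P is a solution of the dynamics on the time interval [k,k+1] with heading angles
  theta (constant on the interval) and initial configuration p0 at time k:
  continuous on [k,k+1], and the derivative equation holds on (k,k+1) except possibly
  on a countable set of (switching) times.\<close>
definition is_solution ::
  "nat \<Rightarrow> real \<Rightarrow> nat \<Rightarrow> (nat \<Rightarrow> real) \<Rightarrow> (nat \<Rightarrow> real^2) \<Rightarrow> (real \<Rightarrow> nat \<Rightarrow> real^2) \<Rightarrow> bool" where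
  "is_solution n \<delta> k \<theta> p0 P \<longleftrightarrow>
     (\<forall>i<n. P (real k) i = p0 i) \<and>
     (\<forall>i<n. continuous_on {real k..real k + 1} (\<lambda>t. P t i)) \<and>
     (\<exists>S. countable S \<and>
        (\<forall>t\<in>{real k<..<real k + 1} - S. \<forall>i<n.
           ((\<lambda>\<tau>. P \<tau> i) has_vector_derivative
              (agent_speed n \<delta> (\<theta> i) (P t) i *\<^sub>R heading (\<theta> i))) (at t)))"

definition heading_measure :: "nat \<Rightarrow> (nat \<Rightarrow> real) measure" where
  "heading_measure n = PiM {..<n} (\<lambda>_. uniform_measure lborel {0..<2*pi})"

end

theory Submission
  imports Defs
begin


lemma mvt_countable:
  fixes g :: "real \<Rightarrow> real"
  assumes ab: "a \<le> b" and cont: "continuous_on {a..b} g" and cS: "countable S"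
    and der: "\<And>t. t \<in> {a<..<b} - S \<Longrightarrow> \<exists>D. (g has_real_derivative D) (at t) \<and> D \<le> B"
  shows "g b - g a \<le> B * (b - a)"
proof (rule ccontr)
  assume "\<not> ?thesis"
  hence gt: "g b - g a > B*(b-a)" by simp
  have ab': "a < b" using gt ab by (cases "a = b") auto
  define e where "e = (g b - g a - B*(b-a)) / (2*(b-a))"
  have e: "e > 0" using gt ab' by (simp add: e_def)
  define G where "G t = g t - g a - (B+e)*(t-a)" for t
  have Gb: "G b > 0"
  proof -
    have "e * (b - a) = (g b - g a - B*(b-a)) / 2" using ab' by (simp add: e_def field_simps)
    thus ?thesis using gt by (simp add: G_def algebra_simps)
  qed
  have Ga: "G a = 0" by (simp add: G_def)
  have Gc: "continuous_on {a..b} G" unfolding G_def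
    by (intro continuous_intros cont)
  define T where "T y = Sup {t\<in>{a..b}. G t \<le> y}" for y
  have key: "T y \<in> S \<and> G (T y) = y" if y: "y \<in> {0<..<G b}" for y
  proof -
    let ?A = "{t\<in>{a..b}. G t \<le> y}"
    have ne: "a \<in> ?A" using y Ga ab by auto
    have bdd: "bdd_above ?A" by (rule bdd_aboveI[of _ b]) auto
    have "?A = {a..b} \<inter> G -` {..y}" by auto
    hence cl: "closed ?A" using continuous_closed_preimage[OF Gc closed_atLeastAtMost, of "{..y}"] by auto
    have TA: "T y \<in> ?A" unfolding T_def using closed_contains_Sup[OF _ bdd cl] ne by blast
    have up: "G t > y" if "T y < t" "t \<le> b" for t
    proof (rule ccontr)
      assume "\<not> G t > y"
      hence "t \<in> ?A" using that TA by auto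
      hence "t \<le> T y" unfolding T_def using cSup_upper[OF _ bdd] by blast
      thus False using that by simp
    qed
    have Tb: "T y < b" using TA y up by (cases "T y = b") auto
    have GT: "G (T y) = y"
    proof (rule ccontr)
      assume "G (T y) \<noteq> y"
      hence lt: "G (T y) < y" using TA by simp
      obtain d where d: "d > 0" "\<And>t. t \<in> {a..b} \<Longrightarrow> dist t (T y) < d \<Longrightarrow> dist (G t) (G (T y)) < y - G (T y)"
        using Gc TA lt unfolding continuous_on_iff by (metis (no_types, lifting) diff_gt_0_iff_gt mem_Collect_eq)
      define t where "t = min b (T y + d/2)"
      have t1: "T y < t" "t \<le> b" using Tb d by (auto simp: t_def)
      have "t \<in> {a..b}" using t1 TA by auto
      moreover have "dist t (T y) < d" using t1 d by (auto simp: t_def dist_real_def)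
      ultimately have "dist (G t) (G (T y)) < y - G (T y)" using d by blast
      hence "G t < y" by (auto simp: dist_real_def)
      thus False using up[OF t1] by simp
    qed
    have Ta: "a < T y" using TA GT Ga y by (cases "T y = a") auto
    show ?thesis
    proof (rule ccontr)
      assume "\<not> ?thesis"
      hence "T y \<notin> S" using GT by blast
      then obtain D where D: "(g has_real_derivative D) (at (T y))" "D \<le> B"
        using der Ta Tb by auto
      have "(G has_real_derivative D - (B+e)) (at (T y))" unfolding G_def
        by (auto intro!: derivative_eq_intros D(1))
      moreover have "D - (B+e) < 0" using D e by simp
      ultimately obtain d where d: "d > 0" "\<And>h. h > 0 \<Longrightarrow> h < d \<Longrightarrow> G (T y) > G (T y + h)"
        using DERIV_neg_dec_right by blast
      define h where "h = min (d/2) (b - T y)"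
      have "h > 0" "h < d" using d Tb by (auto simp: h_def)
      hence "G (T y + h) < y" using d GT by auto
      moreover have "G (T y + h) > y" using up[of "T y + h"] \<open>h > 0\<close> by (auto simp: h_def)
      ultimately show False by simp
    qed
  qed
  have "inj_on T {0<..<G b}" by (rule inj_onI) (metis key)
  moreover have "countable (T ` {0<..<G b})"
    using key by (intro countable_subset[OF _ cS]) auto
  ultimately have "countable {0<..<G b}" using countable_image_inj_on by blast
  thus False using uncountable_open_interval Gb by blast
qed



lemma inner2: "(x::real^2) \<bullet> y = x$1*y$1 + x$2*y$2"
  by (simp add: inner_vec_def sum_2)
lemma norm2: "norm (x::real^2) = sqrt ((x$1)^2 + (x$2)^2)"
  by (simp add: norm_vec_def L2_set_def sum_2)
lemma heading_comp[simp]: "heading a $ 1 = cos a" "heading a $ 2 = sin a"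
  by (simp_all add: heading_def)
lemma norm_heading[simp]: "norm (heading a) = 1"
  by (simp add: norm2)

lemma inner_deriv:
  fixes f :: "real \<Rightarrow> real^2"
  assumes "(f has_vector_derivative v) (at t)"
  shows "((\<lambda>t. e \<bullet> f t) has_real_derivative e \<bullet> v) (at t)"
proof -
  have "((\<lambda>t. e \<bullet> f t) has_derivative (\<lambda>x. e \<bullet> (x *\<^sub>R v))) (at t)"
    using has_derivative_inner_right[OF assms[unfolded has_vector_derivative_def]] by simp
  moreover have "(\<lambda>x. e \<bullet> (x *\<^sub>R v)) = (*) (e \<bullet> v)" by (auto simp: mult.commute)
  ultimately show ?thesis unfolding has_field_derivative_def by simp
qed

lemma mvt_norm:
  fixes f :: "real \<Rightarrow> real^2"
  assumes ab: "a \<le> b" and cont: "continuous_on {a..b} f" and cS: "countable S" and B0: "B \<ge> 0"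
    and der: "\<And>t. t \<in> {a<..<b} - S \<Longrightarrow> \<exists>v. (f has_vector_derivative v) (at t) \<and> norm v \<le> B"
  shows "norm (f b - f a) \<le> B*(b-a)"
proof -
  define e where "e = f b - f a"
  have "(\<lambda>t. e \<bullet> f t) b - (\<lambda>t. e \<bullet> f t) a \<le> (norm e * B) * (b - a)"
  proof (rule mvt_countable[OF ab _ cS])
    show "continuous_on {a..b} (\<lambda>t. e \<bullet> f t)" by (intro continuous_intros cont)
    fix t assume "t \<in> {a<..<b} - S"
    then obtain v where v: "(f has_vector_derivative v) (at t)" "norm v \<le> B" using der by blast
    have "e \<bullet> v \<le> norm e * B"
      using norm_cauchy_schwarz[of e v] v(2) mult_left_mono[OF v(2) norm_ge_zero[of e]] by linarith
    thus "\<exists>D. ((\<lambda>t. e \<bullet> f t) has_real_derivative D) (at t) \<and> D \<le> norm e * B"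
      using inner_deriv[OF v(1)] by blast
  qed
  hence "norm e * norm e \<le> norm e * (B * (b - a))"
    by (simp add: e_def inner_diff_right[symmetric] power2_norm_eq_inner[symmetric] power2_eq_square mult.assoc)
  moreover have "B * (b - a) \<ge> 0" using B0 ab by simp
  ultimately show ?thesis
    unfolding e_def[symmetric]
    by (cases "norm e = 0") (auto simp: mult_le_cancel_left)
qed



lemma heading_periodic: "heading (x + 2 * pi * of_int k) = heading x"
proof -
  have "cos (x + 2 * pi * of_int k) = cos x" "sin (x + 2 * pi * of_int k) = sin x"
    by (simp_all add: cos_add sin_add)
  thus ?thesis by (simp add: heading_def)
qed

lemma cone_bisector:
  fixes q :: "real^2"
  assumes b: "0 < b" "b < pi/2"
    and h1: "heading (c - b) \<bullet> q \<ge> 0" and h2: "heading (c + b) \<bullet> q \<ge> 0"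
  shows "heading c \<bullet> q \<ge> sin b * norm q"
proof -
  define A where "A = cos c * q$1 + sin c * q$2"
  define B where "B = - sin c * q$1 + cos c * q$2"
  have e1: "heading (c - b) \<bullet> q = cos b * A - sin b * B"
    by (simp add: inner2 cos_diff sin_diff A_def B_def algebra_simps)
  have e2: "heading (c + b) \<bullet> q = cos b * A + sin b * B"
    by (simp add: inner2 cos_add sin_add A_def B_def algebra_simps)
  have hc: "heading c \<bullet> q = A" by (simp add: inner2 A_def)
  have "A^2 + B^2 = (sin c ^2 + cos c ^2) * ((q$1)^2 + (q$2)^2)"
    unfolding A_def B_def by algebra
  hence s1: "A^2 + B^2 = (q$1)^2 + (q$2)^2" by simp
  have "(norm q)^2 = (q$1)^2 + (q$2)^2" unfolding norm2 by simp
  hence nq: "(norm q)^2 = A^2 + B^2" using s1 by simp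
  have cb: "cos b > 0" using b by (intro cos_gt_zero) auto
  have sb: "sin b > 0" using b by (intro sin_gt_zero) auto
  have k: "sin b * \<bar>B\<bar> \<le> cos b * A" using h1 h2 e1 e2 sb by (auto simp: abs_if)
  have A0: "A \<ge> 0" using k cb sb by (smt (verit) mult_nonneg_nonneg zero_le_mult_iff abs_ge_zero)
  have "(sin b * \<bar>B\<bar>)^2 \<le> (cos b * A)^2"
    using k sb by (intro power_mono) auto
  hence "(sin b)^2 * B^2 \<le> (cos b)^2 * A^2" by (simp add: power_mult_distrib)
  hence k2: "(sin b)^2 * B^2 \<le> (cos b)^2 * A^2" .
  have "(sin b * norm q)^2 = (sin b)^2 * A^2 + (sin b)^2 * B^2" using nq by (simp add: power_mult_distrib distrib_left)
  also have "\<dots> \<le> (sin b)^2 * A^2 + (cos b)^2 * A^2" using k2 by simp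
  also have "\<dots> = A^2" by (metis distrib_right sin_cos_squared_add mult_1)
  finally have "(sin b * norm q)^2 \<le> A^2" .
  hence "sin b * norm q \<le> A" using A0 by (rule power2_le_imp_le)
  thus ?thesis using hc by simp
qed



lemma ex_min_fun: "(0::nat) < n \<Longrightarrow> \<exists>i<n. \<forall>j<n. (F i::real) \<le> F j"
proof (induction n)
  case 0 thus ?case by simp
next
  case (Suc n)
  show ?case
  proof (cases "n = 0")
    case True thus ?thesis by auto
  next
    case False
    then obtain i where i: "i < n" "\<forall>j<n. F i \<le> F j" using Suc by auto
    show ?thesis
    proof (cases "F i \<le> F n")
      case True thus ?thesis using i by (auto simp: less_Suc_eq)
    next
      case False thus ?thesis using i by (auto simp: less_Suc_eq intro!: exI[of _ n])
    qed
  qed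
qed

lemma three_elems:
  fixes M :: "nat set"
  assumes "card M \<ge> 3"
  shows "\<exists>x y z. x \<in> M \<and> y \<in> M \<and> z \<in> M \<and> x < y \<and> y < z"
proof -
  have fin: "finite M" using assms by (metis card.infinite not_numeral_le_zero)
  have ne: "M \<noteq> {}" using assms by auto
  define x where "x = Min M"
  have x: "x \<in> M" "\<And>w. w \<in> M \<Longrightarrow> x \<le> w" using fin ne by (auto simp: x_def)
  define M1 where "M1 = M - {x}"
  have c1: "card M1 \<ge> 2" using assms x fin by (simp add: M1_def)
  have fin1: "finite M1" using fin by (simp add: M1_def)
  have fin1b: "M1 \<noteq> {}" using c1 by (metis card.empty not_numeral_le_zero)
  define y where "y = Min M1"
  have y: "y \<in> M1" "\<And>w. w \<in> M1 \<Longrightarrow> y \<le> w" using fin1 fin1b by (auto simp: y_def)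
  define M2 where "M2 = M1 - {y}"
  have c2: "card M2 \<ge> 1" using c1 y fin1 by (simp add: M2_def)
  then obtain z where z: "z \<in> M2" by (metis card.empty ex_in_conv not_one_le_zero)
  have "x < y" using x y by (auto simp: M1_def order_le_less)
  moreover have "y < z" using y z by (auto simp: M2_def order_le_less)
  ultimately show ?thesis using x y z by (auto simp: M1_def M2_def)
qed

lemma pigeon3:
  fixes f :: "nat \<Rightarrow> nat"
  assumes "\<And>m. f m < n"
  shows "\<exists>i<n. card {m\<in>{..<2*n+1}. f m = i} \<ge> 3"
proof (rule ccontr)
  assume "\<not> ?thesis"
  hence le: "\<And>i. i < n \<Longrightarrow> card {m\<in>{..<2*n+1}. f m = i} \<le> 2" by force
  have "{..<2*n+1} \<subseteq> (\<Union>i\<in>{..<n}. {m\<in>{..<2*n+1}. f m = i})" using assms by auto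
  hence "card {..<2*n+1} \<le> card (\<Union>i\<in>{..<n}. {m\<in>{..<2*n+1}. f m = i})"
    by (intro card_mono) auto
  also have "\<dots> \<le> (\<Sum>i\<in>{..<n}. card {m\<in>{..<2*n+1}. f m = i})" by (rule card_UN_le) simp
  also have "\<dots> \<le> (\<Sum>i\<in>{..<n}. 2)" using le by (intro sum_mono) auto
  finally show False by simp
qed



lemma geom:
  fixes p :: "nat \<Rightarrow> real^2"
  assumes n: "n > 0"
  shows "\<exists>i<n. \<exists>\<phi>. 0 \<le> \<phi> \<and> \<phi> < 2*pi \<and>
     (\<forall>j<n. heading \<phi> \<bullet> (p j - p i) \<ge> sin (pi/(2*n+1)) * norm (p j - p i))"
proof -
  define N where "N = 2*n+1"
  have rN: "real N = 2*real n + 1" by (simp add: N_def)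
  have Npos: "real N > 0" using rN by simp
  define ang where "ang m = 2*pi*real m / real N" for m
  have "\<forall>m. \<exists>i. i < n \<and> (\<forall>j<n. heading (ang m) \<bullet> p i \<le> heading (ang m) \<bullet> p j)"
  proof
    fix m show "\<exists>i. i < n \<and> (\<forall>j<n. heading (ang m) \<bullet> p i \<le> heading (ang m) \<bullet> p j)"
      using ex_min_fun[OF n, where F="\<lambda>j. heading (ang m) \<bullet> p j"] by blast
  qed
  then obtain f where f0: "\<forall>m. f m < n \<and> (\<forall>j<n. heading (ang m) \<bullet> p (f m) \<le> heading (ang m) \<bullet> p j)"
    using choice[of "\<lambda>m i. i < n \<and> (\<forall>j<n. heading (ang m) \<bullet> p i \<le> heading (ang m) \<bullet> p j)"] by blast
  have f: "\<And>m. f m < n" "\<And>m j. j < n \<Longrightarrow> heading (ang m) \<bullet> p (f m) \<le> heading (ang m) \<bullet> p j"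
    using f0 by auto
  obtain i where i: "i < n" "card {m\<in>{..<N}. f m = i} \<ge> 3"
    using pigeon3[of f n, OF f(1)] unfolding N_def by blast
  obtain x y z where xyz: "x \<in> {m\<in>{..<N}. f m = i}" "y \<in> {m\<in>{..<N}. f m = i}" "z \<in> {m\<in>{..<N}. f m = i}" "x < y" "y < z"
    using three_elems[OF i(2)] by blast
  have mi: "heading (ang m) \<bullet> (p j - p i) \<ge> 0" if "f m = i" "j < n" for m j
    using f(2)[of j m] that by (simp add: inner_diff_right)
  have "\<exists>\<alpha> g. 1 \<le> g \<and> 3*g \<le> N \<and> (\<forall>j<n. heading \<alpha> \<bullet> (p j - p i) \<ge> 0 \<and>
            heading (\<alpha> + 2*pi*real g/real N) \<bullet> (p j - p i) \<ge> 0)"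
  proof -
    consider "3*(y-x) \<le> N" | "3*(z-y) \<le> N" | "3*(N+x-z) \<le> N" using xyz by linarith
    thus ?thesis
    proof cases
      case 1
      have "ang x + 2*pi*real (y-x)/real N = ang y"
        using xyz Npos by (simp add: ang_def of_nat_diff field_simps)
      thus ?thesis using 1 xyz mi by (intro exI[of _ "ang x"] exI[of _ "y-x"]) auto
    next
      case 2
      have "ang y + 2*pi*real (z-y)/real N = ang z"
        using xyz Npos by (simp add: ang_def of_nat_diff field_simps)
      thus ?thesis using 2 xyz mi by (intro exI[of _ "ang y"] exI[of _ "z-y"]) auto
    next
      case 3
      have "ang z + 2*pi*real (N+x-z)/real N = ang x + 2 * pi * of_int 1"
        using xyz Npos by (simp add: ang_def of_nat_diff field_simps)
      hence "heading (ang z + 2*pi*real (N+x-z)/real N) = heading (ang x)"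
        using heading_periodic[of "ang x" 1] by simp
      thus ?thesis using 3 xyz mi by (intro exI[of _ "ang z"] exI[of _ "N+x-z"]) auto
    qed
  qed
  then obtain \<alpha> g where ag: "1 \<le> g" "3*g \<le> N"
    "\<And>j. j<n \<Longrightarrow> heading \<alpha> \<bullet> (p j - p i) \<ge> 0"
    "\<And>j. j<n \<Longrightarrow> heading (\<alpha> + 2*pi*real g/real N) \<bullet> (p j - p i) \<ge> 0" by blast
  define b where "b = pi * real g / real N"
  define c where "c = \<alpha> + b"
  have b1: "b \<ge> pi / real N" using ag(1) Npos by (simp add: b_def divide_right_mono)
  have b2: "b \<le> pi / 3"
  proof -
    have "real g / real N \<le> 1/3" using ag(2) Npos by (simp add: field_simps)
    thus ?thesis unfolding b_def using mult_left_mono[of "real g / real N" "1/3" pi]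
      by (simp add: pi_gt_zero less_imp_le)
  qed
  have bpos: "0 < b" using b1 Npos by (smt (verit) divide_pos_pos pi_gt_zero)
  have bpi: "b < pi/2" using b2 pi_gt_zero by linarith
  have piN: "pi / real N \<ge> 0" using Npos pi_gt_zero by simp
  have sN: "sin (pi / real N) \<le> sin b"
    by (rule sin_monotone_2pi_le) (use piN bpi b1 pi_gt_zero in linarith)+
  have key: "heading c \<bullet> (p j - p i) \<ge> sin (pi / real N) * norm (p j - p i)" if j: "j < n" for j
  proof -
    have "heading (c - b) \<bullet> (p j - p i) \<ge> 0" using ag(3)[OF j] by (simp add: c_def)
    moreover have "c + b = \<alpha> + 2*pi*real g/real N" by (simp add: c_def b_def)
    hence "heading (c + b) \<bullet> (p j - p i) \<ge> 0" using ag(4)[OF j] by simp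
    ultimately have "heading c \<bullet> (p j - p i) \<ge> sin b * norm (p j - p i)"
      using cone_bisector[OF bpos bpi] by blast
    moreover have "sin (pi / real N) * norm (p j - p i) \<le> sin b * norm (p j - p i)"
      using sN by (simp add: mult_right_mono)
    ultimately show ?thesis by linarith
  qed
  define k where "k = \<lfloor>c / (2*pi)\<rfloor>"
  define \<phi> where "\<phi> = c + 2 * pi * of_int (-k)"
  have hp: "heading \<phi> = heading c" unfolding \<phi>_def by (rule heading_periodic)
  have k1: "real_of_int k \<le> c/(2*pi)" "c/(2*pi) < real_of_int k + 1" unfolding k_def by linarith+
  have "2*pi*real_of_int k \<le> c" "c < 2*pi*real_of_int k + 2*pi"
    using k1 pi_gt_zero by (simp_all add: field_simps)
  hence p1: "0 \<le> \<phi>" "\<phi> < 2*pi" by (simp_all add: \<phi>_def)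
  have "\<forall>j<n. heading \<phi> \<bullet> (p j - p i) \<ge> sin (pi/(2*n+1)) * norm (p j - p i)"
    using key hp rN by (simp add: add.commute)
  thus ?thesis using p1 i(1) by blast
qed



lemma heading_measure_slice:
  assumes i: "i < n" and uv: "0 \<le> u" "u \<le> v" "v < 2*pi"
  shows "{\<theta> \<in> space (heading_measure n). \<theta> i \<in> {u..v}} \<in> sets (heading_measure n)"
    "measure (heading_measure n) {\<theta> \<in> space (heading_measure n). \<theta> i \<in> {u..v}} = (v - u)/(2*pi)"
proof -
  define U where "U = uniform_measure lborel {0..<2*pi}"
  have e: "emeasure lborel {0..<2*pi} = ennreal (2*pi)" using pi_gt_zero by simp
  have pU: "prob_space U" unfolding U_def
    by (rule prob_space_uniform_measure) (use pi_gt_zero in \<open>simp_all add: e\<close>)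
  have hm: "heading_measure n = PiM {..<n} (\<lambda>_. U)" by (simp add: heading_measure_def U_def)
  have meas: "(\<lambda>\<theta>. \<theta> i) \<in> measurable (heading_measure n) U"
    unfolding hm using measurable_component_singleton[of i "{..<n}" "\<lambda>_. U"] i by simp
  have Bs: "{u..v} \<in> sets U" by (simp add: U_def)
  have set_eq: "{\<theta> \<in> space (heading_measure n). \<theta> i \<in> {u..v}} = (\<lambda>\<theta>. \<theta> i) -` {u..v} \<inter> space (heading_measure n)" by auto
  show "{\<theta> \<in> space (heading_measure n). \<theta> i \<in> {u..v}} \<in> sets (heading_measure n)"
    unfolding set_eq by (rule measurable_sets[OF meas Bs])
  have "distr (heading_measure n) U (\<lambda>\<theta>. \<theta> i) = U"
    unfolding hm using distr_PiM_component[of "{..<n}" "\<lambda>_. U" i] pU i by simp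
  hence "measure (heading_measure n) {\<theta> \<in> space (heading_measure n). \<theta> i \<in> {u..v}} = measure U {u..v}"
    using measure_distr[OF meas Bs] set_eq by simp
  also have "\<dots> = measure lborel ({0..<2*pi} \<inter> {u..v}) / measure lborel {0..<2*pi}"
    unfolding U_def by (rule measure_uniform_measure) (use pi_gt_zero in \<open>simp_all add: e\<close>)
  also have "{0..<2*pi} \<inter> {u..v} = {u..v}" using uv by auto
  finally show "measure (heading_measure n) {\<theta> \<in> space (heading_measure n). \<theta> i \<in> {u..v}} = (v - u)/(2*pi)"
    using uv pi_gt_zero by simp
qed

lemma heading_close: "norm (heading a - heading b) \<le> 2 * \<bar>a - b\<bar>"
proof -
  have "norm (heading a - heading b) \<le> \<bar>cos a - cos b\<bar> + \<bar>sin a - sin b\<bar>"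
    using norm_le_l1_cart[of "heading a - heading b"] by (simp add: sum_2)
  moreover have "\<bar>cos a - cos b\<bar> \<le> \<bar>a - b\<bar>"
  proof -
    have "\<bar>cos a - cos b\<bar> = 2 * \<bar>sin ((a + b) / 2)\<bar> * \<bar>sin ((b - a) / 2)\<bar>"
      by (simp add: cos_diff_cos abs_mult)
    also have "\<dots> \<le> 2 * 1 * \<bar>(b - a) / 2\<bar>"
      by (intro mult_mono abs_sin_x_le_abs_x) auto
    finally show ?thesis by simp
  qed
  moreover have "\<bar>sin a - sin b\<bar> \<le> \<bar>a - b\<bar>"
  proof -
    have "\<bar>sin a - sin b\<bar> = 2 * \<bar>sin ((a - b) / 2)\<bar> * \<bar>cos ((a + b) / 2)\<bar>"
      by (simp add: sin_diff_sin abs_mult)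
    also have "\<dots> \<le> 2 * \<bar>(a - b) / 2\<bar> * 1"
      by (intro mult_mono abs_sin_x_le_abs_x) auto
    finally show ?thesis by simp
  qed
  ultimately show ?thesis by (smt (verit))
qed

lemma heading_self: "heading a \<bullet> heading a = 1"
  by (simp add: inner2)

lemma agent_speed_01: "agent_speed n \<delta> a p i = 0 \<or> agent_speed n \<delta> a p i = 1"
  by (simp add: agent_speed_def)

lemma motion:
  assumes dl: "\<delta> > 0" and sg: "0 < \<sigma>" "\<sigma> \<le> 1" and i: "i < n"
    and hq: "\<And>j. j < n \<Longrightarrow> heading (\<theta> i) \<bullet> (p0 j - p0 i) \<ge> \<sigma>/2 * norm (p0 j - p0 i)"
    and sol: "is_solution n \<delta> k \<theta> p0 P"
    and d: "d = min (1/2) (\<sigma>*\<delta>/16)"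
  shows "dist (P (real k + 1) i) (P (real k) i) \<ge> d"
proof -
  define h where "h = heading (\<theta> i)"
  obtain S where init: "\<And>j. j<n \<Longrightarrow> P (real k) j = p0 j"
    and cont: "\<And>j. j<n \<Longrightarrow> continuous_on {real k..real k + 1} (\<lambda>t. P t j)"
    and cS: "countable S"
    and der: "\<And>t j. t\<in>{real k<..<real k + 1} - S \<Longrightarrow> j<n \<Longrightarrow>
           ((\<lambda>\<tau>. P \<tau> j) has_vector_derivative
              (agent_speed n \<delta> (\<theta> j) (P t) j *\<^sub>R heading (\<theta> j))) (at t)"
    using sol unfolding is_solution_def by metis
  have d0: "0 < d" "d \<le> 1/2" using d sg dl by auto
  have d1: "2 * d \<le> \<sigma>*\<delta>/8" using d by simp
  have disp: "norm (P t j - p0 j) \<le> t - real k" if j: "j < n" and t: "t \<in> {real k..real k+1}" for j t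
  proof -
    have "norm ((\<lambda>\<tau>. P \<tau> j) t - (\<lambda>\<tau>. P \<tau> j) (real k)) \<le> 1 * (t - real k)"
    proof (rule mvt_norm[OF _ _ cS])
      show "real k \<le> t" using t by simp
      show "continuous_on {real k..t} (\<lambda>\<tau>. P \<tau> j)"
        using cont[OF j] by (rule continuous_on_subset) (use t in auto)
      fix \<tau> assume "\<tau> \<in> {real k<..<t} - S"
      hence "\<tau> \<in> {real k<..<real k + 1} - S" using t by auto
      moreover have "norm (agent_speed n \<delta> (\<theta> j) (P \<tau>) j *\<^sub>R heading (\<theta> j)) \<le> 1"
        using agent_speed_01[of n \<delta> "\<theta> j" "P \<tau>" j] by auto
      ultimately show "\<exists>v. ((\<lambda>\<tau>. P \<tau> j) has_vector_derivative v) (at \<tau>) \<and> norm v \<le> 1"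
        using der[OF _ j] by blast
    qed simp
    thus ?thesis using init[OF j] by simp
  qed
  have fast: "agent_speed n \<delta> (\<theta> i) (P t) i = 1" if t: "t \<in> {real k..real k + d}" for t
  proof (rule ccontr)
    assume "agent_speed n \<delta> (\<theta> i) (P t) i \<noteq> 1"
    then obtain j where j: "j < n" "dist (P t i) (P t j) > \<delta>" "h \<bullet> (P t j - P t i) \<le> 0"
      unfolding agent_speed_def h_def by (auto split: if_splits)
    have t': "t \<in> {real k..real k+1}" using t d0 by auto
    define q where "q = p0 j - p0 i"
    define q' where "q' = P t j - P t i"
    have "q' - q = (P t j - p0 j) - (P t i - p0 i)" by (simp add: q_def q'_def algebra_simps)
    hence "norm (q' - q) \<le> norm (P t j - p0 j) + norm (P t i - p0 i)" using norm_triangle_ineq4 by metis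
    also have "\<dots> \<le> 2 * d" using disp[OF j(1) t'] disp[OF i t'] t by auto
    finally have nd: "norm (q' - q) \<le> 2 * d" .
    have nq': "norm q' > \<delta>" using j(2) by (simp add: q'_def dist_norm norm_minus_commute)
    have "norm q' \<le> norm q + norm (q' - q)" using norm_triangle_ineq[of q "q' - q"] by simp
    moreover have "\<sigma>*\<delta> \<le> 1*\<delta>" using sg dl by (intro mult_right_mono) auto
    ultimately have nq: "norm q \<ge> \<delta>/2" using nq' nd d1 sg dl by linarith
    have "h \<bullet> q \<ge> \<sigma>/2 * norm q" using hq[OF j(1)] by (simp add: h_def q_def)
    moreover have "\<sigma>/2 * norm q \<ge> \<sigma>*\<delta>/4" using mult_left_mono[OF nq, of "\<sigma>/2"] sg by simp
    moreover have "h \<bullet> (q' - q) \<ge> - norm (q' - q)"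
    proof -
      have "\<bar>h \<bullet> (q' - q)\<bar> \<le> norm h * norm (q' - q)" by (rule Cauchy_Schwarz_ineq2)
      thus ?thesis by (simp add: h_def)
    qed
    moreover have "h \<bullet> q' = h \<bullet> q + h \<bullet> (q' - q)" by (simp add: inner_diff_right)
    ultimately have "h \<bullet> q' \<ge> \<sigma>*\<delta>/4 - 2*d" using nd by linarith
    moreover have "\<sigma>*\<delta> > 0" using sg dl by simp
    ultimately have "h \<bullet> q' > 0" using d1 by linarith
    thus False using j(3) by (simp add: q'_def)
  qed
  have s1: "(\<lambda>t. (-h) \<bullet> P t i) (real k + d) - (\<lambda>t. (-h) \<bullet> P t i) (real k) \<le> (-1) * (real k + d - real k)"
  proof (rule mvt_countable[OF _ _ cS])
    show "real k \<le> real k + d" using d0 by simp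
    show "continuous_on {real k..real k + d} (\<lambda>t. (-h) \<bullet> P t i)"
      using cont[OF i] d0 by (intro continuous_intros) (rule continuous_on_subset, auto)
    fix t assume t: "t \<in> {real k<..<real k + d} - S"
    hence t1: "t \<in> {real k<..<real k + 1} - S" using d0 by auto
    have sp: "agent_speed n \<delta> (\<theta> i) (P t) i = 1" using fast t by auto
    have D: "((\<lambda>t. (-h) \<bullet> P t i) has_real_derivative (-h) \<bullet> (agent_speed n \<delta> (\<theta> i) (P t) i *\<^sub>R h)) (at t)"
      using inner_deriv[OF der[OF t1 i], of "-h"] unfolding h_def .
    moreover have "(-h) \<bullet> (agent_speed n \<delta> (\<theta> i) (P t) i *\<^sub>R h) = -1" using sp by (simp add: h_def heading_self)
    ultimately show "\<exists>D. ((\<lambda>t. (-h) \<bullet> P t i) has_real_derivative D) (at t) \<and> D \<le> -1" by auto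
  qed
  have s2: "(\<lambda>t. (-h) \<bullet> P t i) (real k + 1) - (\<lambda>t. (-h) \<bullet> P t i) (real k + d) \<le> 0 * (real k + 1 - (real k + d))"
  proof (rule mvt_countable[OF _ _ cS])
    show "real k + d \<le> real k + 1" using d0 by simp
    show "continuous_on {real k + d..real k + 1} (\<lambda>t. (-h) \<bullet> P t i)"
      using cont[OF i] d0 by (intro continuous_intros) (rule continuous_on_subset, auto)
    fix t assume t: "t \<in> {real k + d<..<real k + 1} - S"
    hence t1: "t \<in> {real k<..<real k + 1} - S" using d0 by auto
    have "((\<lambda>t. (-h) \<bullet> P t i) has_real_derivative (-h) \<bullet> (agent_speed n \<delta> (\<theta> i) (P t) i *\<^sub>R h)) (at t)"
      using inner_deriv[OF der[OF t1 i], of "-h"] unfolding h_def .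
    moreover have "(-h) \<bullet> (agent_speed n \<delta> (\<theta> i) (P t) i *\<^sub>R h) \<le> 0"
      using agent_speed_01[of n \<delta> "\<theta> i" "P t" i] by (auto simp: h_def heading_self)
    ultimately show "\<exists>D. ((\<lambda>t. (-h) \<bullet> P t i) has_real_derivative D) (at t) \<and> D \<le> 0" by blast
  qed
  have "h \<bullet> (P (real k + 1) i - P (real k) i) \<ge> d"
    using s1 s2 by (simp add: inner_diff_right)
  moreover have "h \<bullet> (P (real k + 1) i - P (real k) i) \<le> norm (P (real k + 1) i - P (real k) i)"
    using norm_cauchy_schwarz[of h "P (real k + 1) i - P (real k) i"] by (simp add: h_def)
  ultimately show ?thesis by (simp add: dist_norm)
qed



theorem lemma2:
  fixes n :: nat
  shows "\<exists>c>0. \<forall>\<delta>>0. \<exists>d>0. \<forall>(k::nat) (p0 :: nat \<Rightarrow> real^2).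
     \<not> (\<exists>z. \<forall>i<n. dist (p0 i) z \<le> \<delta>) \<longrightarrow>
     (\<exists>i<n. \<exists>A \<in> sets (heading_measure n).
        A \<subseteq> {\<theta>. \<forall>P. is_solution n \<delta> k \<theta> p0 P \<longrightarrow>
                     dist (P (real k + 1) i) (P (real k) i) \<ge> d}
        \<and> measure (heading_measure n) A \<ge> c)"
proof (cases "n = 0")
  case True
  show ?thesis
  proof (rule exI[of _ "1::real"], intro conjI allI impI)
    fix \<delta> :: real assume "\<delta> > 0"
    show "\<exists>d>0. \<forall>(k::nat) (p0 :: nat \<Rightarrow> real^2).
     \<not> (\<exists>z. \<forall>i<n. dist (p0 i) z \<le> \<delta>) \<longrightarrow>
     (\<exists>i<n. \<exists>A \<in> sets (heading_measure n).
        A \<subseteq> {\<theta>. \<forall>P. is_solution n \<delta> k \<theta> p0 P \<longrightarrow>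
                     dist (P (real k + 1) i) (P (real k) i) \<ge> d}
        \<and> measure (heading_measure n) A \<ge> 1)"
      using True by (intro exI[of _ "1::real"]) auto
  qed simp
next
  case False
  hence n: "n > 0" by simp
  define \<sigma> where "\<sigma> = sin (pi/(2*real n+1))"
  have "pi/(2*real n+1) < pi" using n pi_gt_zero by (simp add: divide_less_eq)
  hence sg: "0 < \<sigma>" "\<sigma> \<le> 1" unfolding \<sigma>_def using pi_gt_zero
    by (auto intro!: sin_gt_zero simp: sin_le_one)
  show ?thesis
  proof (rule exI[of _ "\<sigma>/(8*pi)"], intro conjI allI impI)
    show "\<sigma>/(8*pi) > 0" using sg pi_gt_zero by simp
    fix \<delta> :: real assume dl: "\<delta> > 0"
    define d where "d = min (1/2) (\<sigma>*\<delta>/16)"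
    show "\<exists>d>0. \<forall>(k::nat) (p0 :: nat \<Rightarrow> real^2).
     \<not> (\<exists>z. \<forall>i<n. dist (p0 i) z \<le> \<delta>) \<longrightarrow>
     (\<exists>i<n. \<exists>A \<in> sets (heading_measure n).
        A \<subseteq> {\<theta>. \<forall>P. is_solution n \<delta> k \<theta> p0 P \<longrightarrow>
                     dist (P (real k + 1) i) (P (real k) i) \<ge> d}
        \<and> measure (heading_measure n) A \<ge> \<sigma>/(8*pi))"
    proof (intro exI[of _ d] conjI allI impI)
      show "d > 0" using sg dl by (simp add: d_def)
      fix k :: nat and p0 :: "nat \<Rightarrow> real^2"
      obtain i \<phi> where i: "i < n" and ph: "0 \<le> \<phi>" "\<phi> < 2*pi"
        and geo: "\<And>j. j<n \<Longrightarrow> heading \<phi> \<bullet> (p0 j - p0 i) \<ge> \<sigma> * norm (p0 j - p0 i)"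
      proof -
        from geom[OF n, of p0] obtain i \<phi> where "i < n" "0 \<le> \<phi>" "\<phi> < 2*pi"
          "\<forall>j<n. heading \<phi> \<bullet> (p0 j - p0 i) \<ge> sin (pi/(2*n+1)) * norm (p0 j - p0 i)" by blast
        moreover have "sin (pi/(2*n+1)) = \<sigma>" by (simp add: \<sigma>_def add.commute)
        ultimately show ?thesis using that by auto
      qed
      obtain u v where uv: "0 \<le> u" "u \<le> v" "v < 2*pi" "v - u = \<sigma>/4"
        and near: "\<And>a. a \<in> {u..v} \<Longrightarrow> \<bar>a - \<phi>\<bar> \<le> \<sigma>/4"
      proof (cases "\<phi> \<le> pi")
        case True
        show ?thesis
          by (rule that[of \<phi> "\<phi> + \<sigma>/4"]) (use True sg ph pi_gt3 in auto)
      next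
        case False
        show ?thesis
          by (rule that[of "\<phi> - \<sigma>/4" \<phi>]) (use False sg ph pi_gt3 in auto)
      qed
      define A where "A = {\<theta> \<in> space (heading_measure n). \<theta> i \<in> {u..v}}"
      have As: "A \<in> sets (heading_measure n)" and Am: "measure (heading_measure n) A = (v - u)/(2*pi)"
        unfolding A_def by (rule heading_measure_slice(1)[OF i uv(1-3)], rule heading_measure_slice(2)[OF i uv(1-3)])
      have sub: "A \<subseteq> {\<theta>. \<forall>P. is_solution n \<delta> k \<theta> p0 P \<longrightarrow>
                     dist (P (real k + 1) i) (P (real k) i) \<ge> d}"
      proof (intro subsetI CollectI allI impI)
        fix \<theta> P assume th: "\<theta> \<in> A" and sol: "is_solution n \<delta> k \<theta> p0 P"
        have "\<theta> i \<in> {u..v}" using th unfolding A_def by blast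
        hence cl: "\<bar>\<theta> i - \<phi>\<bar> \<le> \<sigma>/4" by (rule near)
        have hq: "heading (\<theta> i) \<bullet> (p0 j - p0 i) \<ge> \<sigma>/2 * norm (p0 j - p0 i)" if j: "j < n" for j
        proof -
          define q where "q = p0 j - p0 i"
          define w where "w = heading (\<theta> i) - heading \<phi>"
          have nw: "norm w \<le> \<sigma>/2" using heading_close[of "\<theta> i" \<phi>] cl by (simp add: w_def)
          have "\<bar>w \<bullet> q\<bar> \<le> norm w * norm q" by (rule Cauchy_Schwarz_ineq2)
          also have "\<dots> \<le> \<sigma>/2 * norm q" using nw by (intro mult_right_mono) auto
          finally have wq: "w \<bullet> q \<ge> - (\<sigma>/2 * norm q)" by simp
          have "heading (\<theta> i) \<bullet> q = heading \<phi> \<bullet> q + w \<bullet> q" by (simp add: w_def inner_diff_left)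
          moreover have "heading \<phi> \<bullet> q \<ge> \<sigma> * norm q" using geo[OF j] by (simp add: q_def)
          ultimately show ?thesis using wq by (simp add: q_def[symmetric])
        qed
        show "dist (P (real k + 1) i) (P (real k) i) \<ge> d"
          by (rule motion[OF dl sg i hq sol d_def])
      qed
      have "\<sigma>/(8*pi) \<le> measure (heading_measure n) A" using Am uv(4) by simp
      thus "\<exists>i<n. \<exists>A \<in> sets (heading_measure n).
        A \<subseteq> {\<theta>. \<forall>P. is_solution n \<delta> k \<theta> p0 P \<longrightarrow>
                     dist (P (real k + 1) i) (P (real k) i) \<ge> d}
        \<and> measure (heading_measure n) A \<ge> \<sigma>/(8*pi)"
        using i As sub by blast
    qed
  qed
qed

end
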